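(* Let $A$ be a right faithful Banach algebra. If $A^* = \langle A^*\triangle A^{**}\rangle$, then the norm of $A$ is equivalent on $A$ to its right multiplier norm $\|a\|_{r}=\sup_{\|x\|_A\le 1}\|xa\|_A$. Symmetrically, if $A$ is left faithful and $A^* = \langle A^{**}\square A^*\rangle$, then the norm of $A$ is equivalent to its left multiplier norm $\|a\|_{l}=\sup_{\|x\|_A\le 1}\|ax\|_A$.
   Context: Arens-type module actions: for a Banach algebra $A$, $a,b\in A$, $f\in A^*$, $m\in A^{**}$, define $f\square a\in A^*$ by $\langle f\square a,b\rangle=\langle f,ab\rangle$ and $m\square f\in A^*$ by $\langle m\square f,a\rangle=\langle m,f\square a\rangle$; define $a\triangle f\in A^*$ by $\langle a\triangle f,b\rangle=\langle f,ba\rangle$ and $f\triangle m\in A^*$ by $\langle f\triangle m,a\rangle=\langle m,a\triangle f\rangle$. $\langle A^*\triangle A^{**}\rangle$ denotes the linear span of $\{f\triangle m: f\in A^*, m\in A^{**}\}$, and similarly for $\langle A^{**}\square A^*\rangle$. $A$ is right faithful if $xa=0$ for all $x\in A$ implies $a=0$ (so that $a\mapsto$ right multiplication by $a$ embeds $A$ injectively into its right multiplier algebra, with norm $\|\cdot\|_r$); left faithful is defined symmetrically. *)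

theory Defs
  imports "HOL-Analysis.Analysis"
begin

(* Banach algebras: types of class real_normed_algebra + banach (real scalars, associative,
   submultiplicative norm, not necessarily unital). A* = 'a =>L real, A** = (A* =>L real). *)

definition sq_fa :: "('a::real_normed_algebra \<Rightarrow>\<^sub>L real) \<Rightarrow> 'a \<Rightarrow> ('a \<Rightarrow>\<^sub>L real)" where
  "sq_fa f a = Blinfun (\<lambda>b. blinfun_apply f (a * b))"

definition sq_mf :: "(('a::real_normed_algebra \<Rightarrow>\<^sub>L real) \<Rightarrow>\<^sub>L real) \<Rightarrow> ('a \<Rightarrow>\<^sub>L real) \<Rightarrow> ('a \<Rightarrow>\<^sub>L real)" where
  "sq_mf m f = Blinfun (\<lambda>a. blinfun_apply m (sq_fa f a))"

definition tr_af :: "'a::real_normed_algebra \<Rightarrow> ('a \<Rightarrow>\<^sub>L real) \<Rightarrow> ('a \<Rightarrow>\<^sub>L real)" where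
  "tr_af a f = Blinfun (\<lambda>b. blinfun_apply f (b * a))"

definition tr_fm :: "('a::real_normed_algebra \<Rightarrow>\<^sub>L real) \<Rightarrow> (('a \<Rightarrow>\<^sub>L real) \<Rightarrow>\<^sub>L real) \<Rightarrow> ('a \<Rightarrow>\<^sub>L real)" where
  "tr_fm f m = Blinfun (\<lambda>a. blinfun_apply m (tr_af a f))"

definition right_faithful :: "'a::real_normed_algebra itself \<Rightarrow> bool" where
  "right_faithful _ \<longleftrightarrow> (\<forall>a::'a. (\<forall>x. x * a = 0) \<longrightarrow> a = 0)"

definition left_faithful :: "'a::real_normed_algebra itself \<Rightarrow> bool" where
  "left_faithful _ \<longleftrightarrow> (\<forall>a::'a. (\<forall>x. a * x = 0) \<longrightarrow> a = 0)"

definition right_mult_norm :: "'a::real_normed_algebra \<Rightarrow> real" where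
  "right_mult_norm a = (SUP x\<in>{x. norm x \<le> 1}. norm (x * a))"

definition left_mult_norm :: "'a::real_normed_algebra \<Rightarrow> real" where
  "left_mult_norm a = (SUP x\<in>{x. norm x \<le> 1}. norm (a * x))"

definition norms_equivalent :: "('a \<Rightarrow> real) \<Rightarrow> ('a \<Rightarrow> real) \<Rightarrow> bool" where
  "norms_equivalent n1 n2 \<longleftrightarrow> (\<exists>c C. 0 < c \<and> 0 < C \<and> (\<forall>a. c * n1 a \<le> n2 a \<and> n2 a \<le> C * n1 a))"

end

theory Submission
  imports Defs
begin



lemma hb_exists:
  fixes x0 :: "'a::real_normed_vector"
  shows "\<exists>g::'a \<Rightarrow>\<^sub>L real. norm g \<le> 1 \<and> blinfun_apply g x0 = norm x0"
proof -
  define p0 where "p0 = (x0, norm x0)"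
  define D where "D = {(x::'a, r::real). r \<le> norm x}"
  define A where "A = {G. subspace G \<and> span {p0} \<subseteq> G \<and> G \<subseteq> D}"
  have spD: "span {p0} \<subseteq> D"
    by (auto simp: span_singleton p0_def D_def abs_mult intro!: mult_right_mono)
  have "\<exists>M\<in>A. \<forall>X\<in>A. M \<subseteq> X \<longrightarrow> X = M"
  proof (rule Zorn_Lemma2, intro ballI)
    fix C assume C: "C \<in> chains A"
    show "\<exists>U\<in>A. \<forall>X\<in>C. X \<subseteq> U"
    proof (cases "C = {}")
      case True
      then show ?thesis using spD by (auto simp: A_def intro!: bexI[of _ "span {p0}"])
    next
      case False
      have CA: "C \<subseteq> A" using C chainsD2 by blast
      have "subspace (\<Union>C)"
        unfolding subspace_def
      proof (intro conjI ballI allI)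
        obtain X where "X \<in> C" using False by blast
        then show "0 \<in> \<Union>C" using CA by (auto simp: A_def subspace_def)
      next
        fix x y assume "x \<in> \<Union>C" "y \<in> \<Union>C"
        then obtain X Y where XY: "X \<in> C" "Y \<in> C" "x \<in> X" "y \<in> Y" by blast
        from chainsD[OF C XY(1,2)] show "x + y \<in> \<Union>C"
        proof
          assume "X \<subseteq> Y"
          moreover have "subspace Y" using XY CA by (auto simp: A_def)
          ultimately have "x + y \<in> Y" using XY by (meson subsetD subspace_add)
          then show ?thesis using XY by blast
        next
          assume "Y \<subseteq> X"
          moreover have "subspace X" using XY CA by (auto simp: A_def)
          ultimately have "x + y \<in> X" using XY by (meson subsetD subspace_add)
          then show ?thesis using XY by blast
        qed
      next
        fix c x assume "x \<in> \<Union>C"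
        then obtain X where "X \<in> C" "x \<in> X" by blast
        moreover have "subspace X" using calculation CA by (auto simp: A_def)
        ultimately show "c *\<^sub>R x \<in> \<Union>C" by (meson UnionI subspace_scale)
      qed
      moreover have "span {p0} \<subseteq> \<Union>C" using False CA by (auto simp: A_def)
      moreover have "\<Union>C \<subseteq> D" using CA by (auto simp: A_def)
      ultimately show ?thesis by (auto simp: A_def)
    qed
  qed
  then obtain M where MA: "M \<in> A" and Mmax: "\<And>X. X \<in> A \<Longrightarrow> M \<subseteq> X \<Longrightarrow> X = M" by blast
  have sM: "subspace M" and p0M: "p0 \<in> M" and MD: "M \<subseteq> D"
    using MA span_base[of p0 "{p0}"] by (auto simp: A_def)
  have Mdom: "(x, r) \<in> M \<Longrightarrow> r \<le> norm x" for x r using MD by (auto simp: D_def)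
  have Madd: "p \<in> M \<Longrightarrow> q \<in> M \<Longrightarrow> p + q \<in> M" for p q using sM by (simp add: subspace_add)
  have Mscale: "p \<in> M \<Longrightarrow> c *\<^sub>R p \<in> M" for p c using sM by (simp add: subspace_scale)
  have M0: "(0, 0) \<in> M" using sM subspace_0 by (metis zero_prod_def)
  have uniq: "(x, r) \<in> M \<Longrightarrow> (x, s) \<in> M \<Longrightarrow> r = s" for x r s
  proof -
    assume a: "(x, r) \<in> M" "(x, s) \<in> M"
    have "(x,r) + (-1) *\<^sub>R (x,s) \<in> M" using a Madd Mscale by blast
    then have "r - s \<le> 0" using Mdom by fastforce
    moreover have "(x,s) + (-1) *\<^sub>R (x,r) \<in> M" using a Madd Mscale by blast
    then have "s - r \<le> 0" using Mdom by fastforce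
    ultimately show "r = s" by simp
  qed
  have total: "\<exists>r. (x1, r) \<in> M" for x1
  proof (rule ccontr)
    assume nx: "\<nexists>r. (x1, r) \<in> M"
    define L where "L = {s - norm (y - x1) | y s. (y, s) \<in> M}"
    define c where "c = Sup L"
    have key: "s - norm (y - x1) \<le> norm (z + x1) - u" if "(y,s) \<in> M" "(z,u) \<in> M" for y s z u
    proof -
      have "(y + z, s + u) \<in> M" using Madd[OF that] by simp
      then have "s + u \<le> norm (y + z)" by (rule Mdom)
      also have "norm (y + z) = norm ((y - x1) + (z + x1))" by (simp add: algebra_simps)
      also have "\<dots> \<le> norm (y - x1) + norm (z + x1)" by (rule norm_triangle_ineq)
      finally show ?thesis by simp
    qed
    have Lne: "L \<noteq> {}" using M0 by (auto simp: L_def)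
    have Lbdd: "bdd_above L"
      unfolding bdd_above_def L_def using key[OF _ M0] by blast
    have c1: "s - norm (y - x1) \<le> c" if "(y,s) \<in> M" for y s
      unfolding c_def by (rule cSup_upper[OF _ Lbdd]) (use that in \<open>auto simp: L_def\<close>)
    have c2: "c \<le> norm (z + x1) - u" if "(z,u) \<in> M" for z u
      unfolding c_def by (rule cSup_least[OF Lne]) (use key that in \<open>auto simp: L_def\<close>)
    define G where "G = span (insert (x1, c) M)"
    have spanM: "span M = M" using sM by (simp add: span_eq_iff)
    have GD: "G \<subseteq> D"
    proof
      fix p assume "p \<in> G"
      then obtain t where "p - t *\<^sub>R (x1, c) \<in> M"
        unfolding G_def span_insert spanM by blast
      moreover define y where "y = fst p - t *\<^sub>R x1"
      moreover define s where "s = snd p - t * c"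
      moreover have "p - t *\<^sub>R (x1, c) = (fst p - t *\<^sub>R x1, snd p - t * c)" by (simp add: prod_eq_iff)
      ultimately have ys: "(y, s) \<in> M" by simp
      have p: "p = (y + t *\<^sub>R x1, s + t * c)" by (simp add: y_def s_def prod_eq_iff)
      have "s + t * c \<le> norm (y + t *\<^sub>R x1)"
      proof (cases "t > 0")
        case True
        have m: "((1/t) *\<^sub>R y, s / t) \<in> M" using Mscale[OF ys, of "1/t"] by simp
        have "c \<le> norm ((1/t) *\<^sub>R y + x1) - s / t" using c2[OF m] .
        then have "t * c \<le> t * (norm ((1/t) *\<^sub>R y + x1) - s / t)"
          using True by (simp add: mult_left_mono)
        then have "t * c \<le> t * norm ((1/t) *\<^sub>R y + x1) - s"
          using True by (simp add: right_diff_distrib)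
        also have "t * norm ((1/t) *\<^sub>R y + x1) = norm (t *\<^sub>R ((1/t) *\<^sub>R y + x1))"
          using True by simp
        also have "t *\<^sub>R ((1/t) *\<^sub>R y + x1) = y + t *\<^sub>R x1"
          using True by (simp add: scaleR_add_right)
        finally show ?thesis by simp
      next
        case False
        show ?thesis
        proof (cases "t = 0")
          case True then show ?thesis using Mdom[OF ys] by simp
        next
          case False
          with \<open>\<not> t > 0\<close> have tn: "-t > 0" by simp
          have m: "((1/(-t)) *\<^sub>R y, s / (-t)) \<in> M" using Mscale[OF ys, of "1/(-t)"] by simp
          have "s / (-t) - norm ((1/(-t)) *\<^sub>R y - x1) \<le> c" using c1[OF m] .
          then have "(-t) * (s / (-t) - norm ((1/(-t)) *\<^sub>R y - x1)) \<le> (-t) * c"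
            using tn by (simp add: mult_left_mono del: minus_mult_left)
          then have "s - (-t) * norm ((1/(-t)) *\<^sub>R y - x1) \<le> (-t) * c"
            using tn by (simp add: right_diff_distrib del: minus_mult_left)
          also have "(-t) * norm ((1/(-t)) *\<^sub>R y - x1) = norm ((-t) *\<^sub>R ((1/(-t)) *\<^sub>R y - x1))"
            using tn by simp
          also have "(-t) *\<^sub>R ((1/(-t)) *\<^sub>R y - x1) = y + t *\<^sub>R x1"
            using tn by (simp add: scaleR_diff_right)
          finally show ?thesis by simp
        qed
      qed
      then show "p \<in> D" using p by (simp add: D_def)
    qed
    have "span {p0} \<subseteq> G" unfolding G_def using p0M by (intro span_mono) auto
    then have "G \<in> A" using GD unfolding A_def by (auto simp: G_def subspace_span)
    moreover have "M \<subseteq> G" unfolding G_def by (meson span_superset subset_insertI subset_trans)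
    ultimately have "G = M" by (rule Mmax)
    moreover have "(x1, c) \<in> G" unfolding G_def by (simp add: span_base)
    ultimately show False using nx by blast
  qed
  define g where "g x = (SOME r. (x, r) \<in> M)" for x
  have gM: "(x, g x) \<in> M" for x unfolding g_def by (rule someI_ex, rule total)
  have gadd: "g (x + y) = g x + g y" for x y
  proof -
    have "(x + y, g x + g y) \<in> M" using Madd[OF gM[of x] gM[of y]] by simp
    then show ?thesis by (rule uniq[OF gM])
  qed
  have gscale: "g (r *\<^sub>R x) = r * g x" for r x
  proof -
    have "(r *\<^sub>R x, r * g x) \<in> M" using Mscale[OF gM[of x], where c=r] by simp
    then show ?thesis by (rule uniq[OF gM])
  qed
  have gbd: "\<bar>g x\<bar> \<le> norm x" for x
  proof -
    have "g x \<le> norm x" using Mdom[OF gM] .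
    moreover have "(-x, - g x) \<in> M" using Mscale[OF gM[of x], where c="-1"] by simp
    then have "-g x \<le> norm (-x)" by (rule Mdom)
    then have "-g x \<le> norm x" by simp
    ultimately show ?thesis by simp
  qed
  have bl: "bounded_linear g"
    by (rule bounded_linear_intro[of _ 1]) (use gadd gscale gbd in auto)
  show ?thesis
  proof (intro exI conjI)
    show "norm (Blinfun g) \<le> 1"
      by (rule norm_blinfun_bound) (use gbd bl in \<open>auto simp: bounded_linear_Blinfun_apply\<close>)
    have "g x0 = norm x0" using uniq[OF gM p0M[unfolded p0_def]] .
    then show "blinfun_apply (Blinfun g) x0 = norm x0" by (simp add: bounded_linear_Blinfun_apply bl)
  qed
qed




lemma ubp:
  fixes T :: "'a::real_normed_vector set"
  assumes bd: "\<And>g::'a \<Rightarrow>\<^sub>L real. \<exists>C. \<forall>a\<in>T. \<bar>blinfun_apply g a\<bar> \<le> C"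
  shows "\<exists>K. \<forall>a\<in>T. \<forall>h::'a \<Rightarrow>\<^sub>L real. norm h \<le> 1 \<longrightarrow> \<bar>blinfun_apply h a\<bar> \<le> K"
proof -
  define F where "F n = {g::'a \<Rightarrow>\<^sub>L real. \<forall>a\<in>T. \<bar>blinfun_apply g a\<bar> \<le> real n}" for n :: nat
  have clF: "closed (F n)" for n
  proof -
    have "F n = (\<Inter>a\<in>T. {g. \<bar>blinfun_apply g a\<bar> \<le> real n})" by (auto simp: F_def)
    moreover have "closed {g::'a \<Rightarrow>\<^sub>L real. \<bar>blinfun_apply g a\<bar> \<le> real n}" for a
      by (intro closed_Collect_le continuous_intros)
    ultimately show ?thesis by auto
  qed
  have "\<exists>n. interior (F n) \<noteq> {}"
  proof (rule ccontr)
    assume "\<nexists>n. interior (F n) \<noteq> {}"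
    then have e: "interior (F n) = {}" for n by blast
    have "Met_TC.mtopology interior_of \<Union>(range F) = {}"
      by (rule Met_TC.metric_Baire_category_alt) (use e clF complete_UNIV in auto)
    moreover have "\<Union>(range F) = UNIV"
    proof -
      have "g \<in> \<Union>(range F)" for g
      proof -
        obtain C where C: "\<forall>a\<in>T. \<bar>blinfun_apply g a\<bar> \<le> C" using bd by blast
        obtain n :: nat where "C \<le> real n" using real_arch_simple by blast
        then have "g \<in> F n" using C by (force simp: F_def)
        then show ?thesis by blast
      qed
      then show ?thesis by blast
    qed
    ultimately show False by simp
  qed
  then obtain n g0 where "g0 \<in> interior (F n)" by blast
  then obtain r where r: "r > 0" "ball g0 r \<subseteq> F n"
    by (meson open_contains_ball open_interior interior_subset subset_trans)
  have "\<bar>blinfun_apply h a\<bar> \<le> 4 * real n / r" if a: "a \<in> T" and h: "norm h \<le> 1" for a h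
  proof -
    have "g0 + (r/2) *\<^sub>R h \<in> ball g0 r"
      using r h by (simp add: dist_norm)
    then have "g0 + (r/2) *\<^sub>R h \<in> F n" using r by blast
    then have 1: "\<bar>blinfun_apply g0 a + (r/2) * blinfun_apply h a\<bar> \<le> real n"
      using a by (simp add: F_def blinfun.add_left blinfun.scaleR_left)
    have "g0 \<in> F n" using r by (simp add: subset_iff)
    then have 2: "\<bar>blinfun_apply g0 a\<bar> \<le> real n" using a by (simp add: F_def)
    have "(r/2) * \<bar>blinfun_apply h a\<bar> \<le> 2 * real n"
      using 1 2 r by (simp add: abs_mult)
    then show ?thesis using r by (simp add: field_simps)
  qed
  then show ?thesis by blast
qed




lemma equiv_abstract:
  fixes N :: "'a::real_normed_vector \<Rightarrow> real"
  assumes up: "\<And>a. N a \<le> norm a"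
    and sc: "\<And>c a. N (c *\<^sub>R a) \<le> \<bar>c\<bar> * N a"
    and nn: "\<And>a. 0 \<le> N a"
    and gb: "\<And>g::'a \<Rightarrow>\<^sub>L real. \<exists>C. \<forall>a. \<bar>blinfun_apply g a\<bar> \<le> C * N a"
  shows "norms_equivalent norm N"
proof -
  define T where "T = {a. N a \<le> 1}"
  have "\<exists>C. \<forall>a\<in>T. \<bar>blinfun_apply g a\<bar> \<le> C" for g :: "'a \<Rightarrow>\<^sub>L real"
  proof -
    obtain C where C: "\<forall>a. \<bar>blinfun_apply g a\<bar> \<le> C * N a" using gb by blast
    have "\<bar>blinfun_apply g a\<bar> \<le> \<bar>C\<bar>" if "a \<in> T" for a
    proof -
      have "C * N a \<le> \<bar>C\<bar> * N a" using nn[of a] by (simp add: mult_right_mono)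
      also have "\<dots> \<le> \<bar>C\<bar> * 1" using that by (intro mult_left_mono) (auto simp: T_def)
      finally show ?thesis using C by (metis order.trans mult_1_right)
    qed
    then show ?thesis by blast
  qed
  from ubp[OF this] obtain K where K: "\<And>a h. a \<in> T \<Longrightarrow> norm (h::'a \<Rightarrow>\<^sub>L real) \<le> 1 \<Longrightarrow> \<bar>blinfun_apply h a\<bar> \<le> K"
    by blast
  define K' where "K' = max K 1"
  have K'pos: "K' > 0" by (simp add: K'_def)
  have main: "norm a \<le> K' * N a" for a
  proof -
    obtain h :: "'a \<Rightarrow>\<^sub>L real" where h: "norm h \<le> 1" "blinfun_apply h a = norm a"
      using hb_exists by blast
    show ?thesis
    proof (cases "N a > 0")
      case True
      define b where "b = (1 / N a) *\<^sub>R a"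
      have "N b \<le> \<bar>1 / N a\<bar> * N a" unfolding b_def by (rule sc)
      also have "\<dots> = 1" using True by simp
      finally have "b \<in> T" by (simp add: T_def)
      then have "\<bar>blinfun_apply h b\<bar> \<le> K" using K h by blast
      moreover have "blinfun_apply h b = norm a / N a"
        using h by (simp add: b_def blinfun.scaleR_right)
      ultimately have "norm a / N a \<le> K" using True by simp
      then have "norm a \<le> K * N a" using True by (simp add: field_simps)
      also have "\<dots> \<le> K' * N a" using True by (intro mult_right_mono) (auto simp: K'_def)
      finally show ?thesis .
    next
      case False
      then have N0: "N a = 0" using nn[of a] by simp
      show ?thesis
      proof (rule ccontr)
        assume "\<not> ?thesis"
        then have pos: "norm a > 0" using N0 by simp
        define c where "c = (K' + 1) / norm a"
        have "N (c *\<^sub>R a) \<le> \<bar>c\<bar> * N a" by (rule sc)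
        then have "c *\<^sub>R a \<in> T" using N0 by (simp add: T_def)
        then have "\<bar>blinfun_apply h (c *\<^sub>R a)\<bar> \<le> K" using K h by blast
        moreover have "blinfun_apply h (c *\<^sub>R a) = K' + 1"
          using h pos K'pos by (simp add: c_def blinfun.scaleR_right)
        ultimately show False using K'pos by (simp add: K'_def)
      qed
    qed
  qed
  show ?thesis unfolding norms_equivalent_def
  proof (intro exI conjI allI)
    show "0 < 1 / K'" "(0::real) < 1" using K'pos by auto
    fix a
    show "1 / K' * norm a \<le> N a" using main[of a] K'pos by (simp add: field_simps)
    show "N a \<le> 1 * norm a" using up by simp
  qed
qed

lemma span_bound:
  fixes N :: "'a::real_normed_vector \<Rightarrow> real"
  assumes nn: "\<And>a. 0 \<le> N a"
    and base: "\<And>s. s \<in> S \<Longrightarrow> \<exists>C. \<forall>a. \<bar>blinfun_apply s a\<bar> \<le> C * N a"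
    and g: "(g::'a \<Rightarrow>\<^sub>L real) \<in> span S"
  shows "\<exists>C. \<forall>a. \<bar>blinfun_apply g a\<bar> \<le> C * N a"
  using g
proof (induct rule: span_induct)
  case (step s)
  then show ?case using assms(2) by simp
next
  case base
  show ?case unfolding subspace_def
  proof (intro conjI ballI allI)
    show "0 \<in> {g::'a \<Rightarrow>\<^sub>L real. \<exists>C. \<forall>a. \<bar>blinfun_apply g a\<bar> \<le> C * N a}"
      by (auto intro: exI[of _ 0])
  next
    fix x y
    assume "x \<in> {g::'a \<Rightarrow>\<^sub>L real. \<exists>C. \<forall>a. \<bar>blinfun_apply g a\<bar> \<le> C * N a}"
      "y \<in> {g::'a \<Rightarrow>\<^sub>L real. \<exists>C. \<forall>a. \<bar>blinfun_apply g a\<bar> \<le> C * N a}"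
    then obtain C1 C2 where 1: "\<forall>a. \<bar>blinfun_apply x a\<bar> \<le> C1 * N a" and 2: "\<forall>a. \<bar>blinfun_apply y a\<bar> \<le> C2 * N a"
      by blast
    have "\<bar>blinfun_apply (x + y) a\<bar> \<le> (C1 + C2) * N a" for a
    proof -
      have "\<bar>blinfun_apply (x + y) a\<bar> \<le> \<bar>blinfun_apply x a\<bar> + \<bar>blinfun_apply y a\<bar>"
        by (simp add: blinfun.add_left abs_triangle_ineq)
      also have "\<dots> \<le> (C1 + C2) * N a" using 1[rule_format, of a] 2[rule_format, of a] by (simp add: distrib_right)
      finally show ?thesis .
    qed
    then show "x + y \<in> {g::'a \<Rightarrow>\<^sub>L real. \<exists>C. \<forall>a. \<bar>blinfun_apply g a\<bar> \<le> C * N a}" by blast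
  next
    fix c x
    assume "x \<in> {g::'a \<Rightarrow>\<^sub>L real. \<exists>C. \<forall>a. \<bar>blinfun_apply g a\<bar> \<le> C * N a}"
    then obtain C where 1: "\<forall>a. \<bar>blinfun_apply x a\<bar> \<le> C * N a" by blast
    have "\<bar>blinfun_apply (c *\<^sub>R x) a\<bar> \<le> (\<bar>c\<bar> * C) * N a" for a
      using 1[rule_format, of a] by (simp add: blinfun.scaleR_left abs_mult mult.assoc mult_left_mono)
    then show "c *\<^sub>R x \<in> {g::'a \<Rightarrow>\<^sub>L real. \<exists>C. \<forall>a. \<bar>blinfun_apply g a\<bar> \<le> C * N a}" by blast
  qed
qed




lemma rmn_props:
  fixes a :: "'a::real_normed_algebra"
  shows rmn_upper: "norm x \<le> 1 \<Longrightarrow> norm (x * a) \<le> right_mult_norm a"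
    and rmn_le: "right_mult_norm a \<le> norm a"
proof -
  have bdd: "bdd_above ((\<lambda>x. norm (x * a)) ` {x. norm x \<le> 1})"
  proof (rule bdd_aboveI2)
    fix x :: 'a assume "x \<in> {x. norm x \<le> 1}"
    then have "norm x * norm a \<le> 1 * norm a" by (intro mult_right_mono) auto
    then show "norm (x * a) \<le> norm a" using norm_mult_ineq[of x a] by simp
  qed
  show "norm x \<le> 1 \<Longrightarrow> norm (x * a) \<le> right_mult_norm a"
    unfolding right_mult_norm_def by (rule cSUP_upper[OF _ bdd]) simp
  show "right_mult_norm a \<le> norm a"
    unfolding right_mult_norm_def
  proof (rule cSUP_least)
    show "{x::'a. norm x \<le> 1} \<noteq> {}" by (auto intro: exI[of _ 0])
    fix x :: 'a assume "x \<in> {x. norm x \<le> 1}"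
    then have "norm x * norm a \<le> 1 * norm a" by (intro mult_right_mono) auto
    then show "norm (x * a) \<le> norm a" using norm_mult_ineq[of x a] by simp
  qed
qed

lemma rmn_nn: "0 \<le> right_mult_norm (a::'a::real_normed_algebra)"
  using rmn_upper[of 0 a] by simp

lemma rmn_sc: "right_mult_norm (c *\<^sub>R (a::'a::real_normed_algebra)) \<le> \<bar>c\<bar> * right_mult_norm a"
  unfolding right_mult_norm_def[of "c *\<^sub>R a"]
proof (rule cSUP_least)
  show "{x::'a. norm x \<le> 1} \<noteq> {}" by (auto intro: exI[of _ 0])
  fix x :: 'a assume "x \<in> {x. norm x \<le> 1}"
  then have "norm (x * a) \<le> right_mult_norm a" by (simp add: rmn_upper)
  then show "norm (x * (c *\<^sub>R a)) \<le> \<bar>c\<bar> * right_mult_norm a"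
    by (simp add: mult_left_mono)
qed

lemma rmn_key: "norm (b * a) \<le> right_mult_norm a * norm (b::'a::real_normed_algebra)"
proof (cases "b = 0")
  case True then show ?thesis by simp
next
  case False
  have "norm ((1 / norm b) *\<^sub>R b * a) \<le> right_mult_norm a" by (rule rmn_upper) (simp add: False)
  then show ?thesis using False by (simp add: field_simps)
qed

lemma lmn_props:
  fixes a :: "'a::real_normed_algebra"
  shows lmn_upper: "norm x \<le> 1 \<Longrightarrow> norm (a * x) \<le> left_mult_norm a"
    and lmn_le: "left_mult_norm a \<le> norm a"
proof -
  have bdd: "bdd_above ((\<lambda>x. norm (a * x)) ` {x. norm x \<le> 1})"
  proof (rule bdd_aboveI2)
    fix x :: 'a assume "x \<in> {x. norm x \<le> 1}"
    then have "norm a * norm x \<le> norm a * 1" by (intro mult_left_mono) auto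
    then show "norm (a * x) \<le> norm a" using norm_mult_ineq[of a x] by simp
  qed
  show "norm x \<le> 1 \<Longrightarrow> norm (a * x) \<le> left_mult_norm a"
    unfolding left_mult_norm_def by (rule cSUP_upper[OF _ bdd]) simp
  show "left_mult_norm a \<le> norm a"
    unfolding left_mult_norm_def
  proof (rule cSUP_least)
    show "{x::'a. norm x \<le> 1} \<noteq> {}" by (auto intro: exI[of _ 0])
    fix x :: 'a assume "x \<in> {x. norm x \<le> 1}"
    then have "norm a * norm x \<le> norm a * 1" by (intro mult_left_mono) auto
    then show "norm (a * x) \<le> norm a" using norm_mult_ineq[of a x] by simp
  qed
qed

lemma lmn_nn: "0 \<le> left_mult_norm (a::'a::real_normed_algebra)"
  using lmn_upper[of 0 a] by simp

lemma lmn_sc: "left_mult_norm (c *\<^sub>R (a::'a::real_normed_algebra)) \<le> \<bar>c\<bar> * left_mult_norm a"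
  unfolding left_mult_norm_def[of "c *\<^sub>R a"]
proof (rule cSUP_least)
  show "{x::'a. norm x \<le> 1} \<noteq> {}" by (auto intro: exI[of _ 0])
  fix x :: 'a assume "x \<in> {x. norm x \<le> 1}"
  then have "norm (a * x) \<le> left_mult_norm a" by (simp add: lmn_upper)
  then show "norm ((c *\<^sub>R a) * x) \<le> \<bar>c\<bar> * left_mult_norm a"
    by (simp add: mult_left_mono)
qed

lemma lmn_key: "norm (a * b) \<le> left_mult_norm a * norm (b::'a::real_normed_algebra)"
proof (cases "b = 0")
  case True then show ?thesis by simp
next
  case False
  have "norm (a * ((1 / norm b) *\<^sub>R b)) \<le> left_mult_norm a" by (rule lmn_upper) (simp add: False)
  then show ?thesis using False by (simp add: field_simps)
qed

lemma tr_af_apply: "blinfun_apply (tr_af a f) b = blinfun_apply f (b * a)"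
  unfolding tr_af_def
  by (simp add: bounded_linear_Blinfun_apply[OF bounded_linear_compose[OF blinfun.bounded_linear_right bounded_linear_mult_left]])

lemma sq_fa_apply: "blinfun_apply (sq_fa f a) b = blinfun_apply f (a * b)"
  unfolding sq_fa_def
  by (simp add: bounded_linear_Blinfun_apply[OF bounded_linear_compose[OF blinfun.bounded_linear_right bounded_linear_mult_right]])

lemma tr_af_norm: "norm (tr_af a f) \<le> norm f * right_mult_norm a"
proof (rule norm_blinfun_bound)
  show "0 \<le> norm f * right_mult_norm a" by (simp add: rmn_nn)
  fix b
  have "norm (blinfun_apply (tr_af a f) b) \<le> norm f * norm (b * a)"
    using norm_blinfun[of f "b * a"] by (simp add: tr_af_apply)
  also have "\<dots> \<le> norm f * (right_mult_norm a * norm b)" by (intro mult_left_mono rmn_key) simp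
  finally show "norm (blinfun_apply (tr_af a f) b) \<le> norm f * right_mult_norm a * norm b"
    by (simp add: mult.assoc)
qed

lemma sq_fa_norm: "norm (sq_fa f a) \<le> norm f * left_mult_norm a"
proof (rule norm_blinfun_bound)
  show "0 \<le> norm f * left_mult_norm a" by (simp add: lmn_nn)
  fix b
  have "norm (blinfun_apply (sq_fa f a) b) \<le> norm f * norm (a * b)"
    using norm_blinfun[of f "a * b"] by (simp add: sq_fa_apply)
  also have "\<dots> \<le> norm f * (left_mult_norm a * norm b)" by (intro mult_left_mono lmn_key) simp
  finally show "norm (blinfun_apply (sq_fa f a) b) \<le> norm f * left_mult_norm a * norm b"
    by (simp add: mult.assoc)
qed

lemma tr_af_bl: "bounded_linear (\<lambda>a. tr_af a f)"
proof (rule bounded_linear_intro[of _ "norm f"])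
  fix x y :: 'a
  show "tr_af (x + y) f = tr_af x f + tr_af y f"
    by (rule blinfun_eqI) (simp add: tr_af_apply blinfun.add_left distrib_left blinfun.add_right)
next
  fix r and x :: 'a
  show "tr_af (r *\<^sub>R x) f = r *\<^sub>R tr_af x f"
    by (rule blinfun_eqI) (simp add: tr_af_apply blinfun.scaleR_left blinfun.scaleR_right)
next
  fix x :: 'a
  have "norm (tr_af x f) \<le> norm f * right_mult_norm x" by (rule tr_af_norm)
  also have "\<dots> \<le> norm f * norm x" by (intro mult_left_mono rmn_le) simp
  finally show "norm (tr_af x f) \<le> norm x * norm f" by (simp add: mult.commute)
qed

lemma sq_fa_bl: "bounded_linear (\<lambda>a. sq_fa f a)"
proof (rule bounded_linear_intro[of _ "norm f"])
  fix x y :: 'a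
  show "sq_fa f (x + y) = sq_fa f x + sq_fa f y"
    by (rule blinfun_eqI) (simp add: sq_fa_apply blinfun.add_left distrib_right blinfun.add_right)
next
  fix r and x :: 'a
  show "sq_fa f (r *\<^sub>R x) = r *\<^sub>R sq_fa f x"
    by (rule blinfun_eqI) (simp add: sq_fa_apply blinfun.scaleR_left blinfun.scaleR_right)
next
  fix x :: 'a
  have "norm (sq_fa f x) \<le> norm f * left_mult_norm x" by (rule sq_fa_norm)
  also have "\<dots> \<le> norm f * norm x" by (intro mult_left_mono lmn_le) simp
  finally show "norm (sq_fa f x) \<le> norm x * norm f" by (simp add: mult.commute)
qed

lemma tr_fm_apply: "blinfun_apply (tr_fm f m) a = blinfun_apply m (tr_af a f)"
  unfolding tr_fm_def
  by (simp add: bounded_linear_Blinfun_apply[OF bounded_linear_compose[OF blinfun.bounded_linear_right tr_af_bl]])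

lemma sq_mf_apply: "blinfun_apply (sq_mf m f) a = blinfun_apply m (sq_fa f a)"
  unfolding sq_mf_def
  by (simp add: bounded_linear_Blinfun_apply[OF bounded_linear_compose[OF blinfun.bounded_linear_right sq_fa_bl]])

lemma tr_fm_bound: "\<bar>blinfun_apply (tr_fm f m) a\<bar> \<le> (norm m * norm f) * right_mult_norm a"
proof -
  have "\<bar>blinfun_apply (tr_fm f m) a\<bar> \<le> norm m * norm (tr_af a f)"
    using norm_blinfun[of m "tr_af a f"] by (simp add: tr_fm_apply)
  also have "\<dots> \<le> norm m * (norm f * right_mult_norm a)" by (intro mult_left_mono tr_af_norm) simp
  finally show ?thesis by (simp add: mult.assoc)
qed

lemma sq_mf_bound: "\<bar>blinfun_apply (sq_mf m f) a\<bar> \<le> (norm m * norm f) * left_mult_norm a"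
proof -
  have "\<bar>blinfun_apply (sq_mf m f) a\<bar> \<le> norm m * norm (sq_fa f a)"
    using norm_blinfun[of m "sq_fa f a"] by (simp add: sq_mf_apply)
  also have "\<dots> \<le> norm m * (norm f * left_mult_norm a)" by (intro mult_left_mono sq_fa_norm) simp
  finally show ?thesis by (simp add: mult.assoc)
qed

theorem corollary1:
  shows "(right_faithful TYPE('a::{real_normed_algebra,banach}) \<and>
           (UNIV :: ('a \<Rightarrow>\<^sub>L real) set) = span {tr_fm (f :: 'a \<Rightarrow>\<^sub>L real) m | f m. True}
           \<longrightarrow> norms_equivalent (norm :: 'a \<Rightarrow> real) right_mult_norm) \<and>
         (left_faithful TYPE('a) \<and>
           (UNIV :: ('a \<Rightarrow>\<^sub>L real) set) = span {sq_mf m (f :: 'a \<Rightarrow>\<^sub>L real) | m f. True}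
           \<longrightarrow> norms_equivalent (norm :: 'a \<Rightarrow> real) left_mult_norm)"
proof (intro conjI impI)
  assume "right_faithful TYPE('a) \<and>
           (UNIV :: ('a \<Rightarrow>\<^sub>L real) set) = span {tr_fm (f :: 'a \<Rightarrow>\<^sub>L real) m | f m. True}"
  then have sp: "\<And>g::'a \<Rightarrow>\<^sub>L real. g \<in> span {tr_fm (f :: 'a \<Rightarrow>\<^sub>L real) m | f m. True}" by auto
  show "norms_equivalent (norm :: 'a \<Rightarrow> real) right_mult_norm"
  proof (rule equiv_abstract[OF rmn_le rmn_sc rmn_nn])
    fix g :: "'a \<Rightarrow>\<^sub>L real"
    show "\<exists>C. \<forall>a. \<bar>blinfun_apply g a\<bar> \<le> C * right_mult_norm a"
      by (rule span_bound[OF rmn_nn _ sp]) (auto intro: tr_fm_bound)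
  qed
next
  assume "left_faithful TYPE('a) \<and>
           (UNIV :: ('a \<Rightarrow>\<^sub>L real) set) = span {sq_mf m (f :: 'a \<Rightarrow>\<^sub>L real) | m f. True}"
  then have sp: "\<And>g::'a \<Rightarrow>\<^sub>L real. g \<in> span {sq_mf m (f :: 'a \<Rightarrow>\<^sub>L real) | m f. True}" by auto
  show "norms_equivalent (norm :: 'a \<Rightarrow> real) left_mult_norm"
  proof (rule equiv_abstract[OF lmn_le lmn_sc lmn_nn])
    fix g :: "'a \<Rightarrow>\<^sub>L real"
    show "\<exists>C. \<forall>a. \<bar>blinfun_apply g a\<bar> \<le> C * left_mult_norm a"
      by (rule span_bound[OF lmn_nn _ sp]) (auto intro: sq_mf_bound)
  qed
qed


end
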